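(* Assume the setting of the context (in particular $\zeta\in[\tfrac12,1]$ and $q_r\in Q_{\mathrm{ad},r}$), and let $\bm u_h=(\bm u_h^k)_k$ and $\bm u_r=(\bm u_r^k)_k$ be the full-order and reduced solutions for $q_r$. Define $$J_h(q_r)=\frac{\Delta t}{2}\sum_{k=1}^K\|\mathcal C_hu_h^k-y_h^{\delta,k}\|_{C_h}^2,\qquad J_r(q_r)=\frac{\Delta t}{2}\sum_{k=1}^K\|\mathcal C_h u_r^k-y_h^{\delta,k}\|_{C_h}^2,$$ where $u_r^k\in V_h$ has coefficient vector $\bm\Psi_V\bm u_r^k$. Let $\bm e^k=\bm u_h^k-\bm\Psi_V\bm u_r^k$, $$\tilde\Delta^u(q_r)=\Big(\Delta t\sum_{k=1}^K(\bm e^k)^\top\bm A_h(q_r)\bm e^k\Big)^{1/2},\qquad a_{q_r}=\frac{\tilde\kappa}{C_P^2}>0,$$ with $C_P>0$ the Poincaré constant of $V$ and $\tilde\kappa$ as in the context. Then $$|J_h(q_r)-J_r(q_r)|\le \frac{\|\mathcal C\|^2_{\mathcal L(V,C)}}{2a_{q_r}}\tilde\Delta^u(q_r)^2+\|\mathcal C\|_{\mathcal L(V,C)}\Big(\frac{2J_r(q_r)}{a_{q_r}}\Big)^{1/2}\tilde\Delta^u(q_r).$$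
   Context: Setting: $\Omega\subset\mathbb{R}^3$ bounded Lipschitz, $\Gamma\subset\partial\Omega$ relatively open of positive measure, $V=H^1_\Gamma(\Omega;\mathbb{R}^3)=\{v\in H^1(\Omega;\mathbb{R}^3):v|_\Gamma=0\}$, $H=L^2(\Omega;\mathbb{R}^3)$, constant density $\rho>0$. Stored energy $C_q(\bm x,Y)=C_0(\bm x,Y)+\sum_{p=1}^{N_Q}q_pC_p(\bm x,Y)$, $C_q\in\mathcal C^4$, $Y\mapsto\nabla_YC_q$ linear, major symmetry of second $Y$-derivatives, and $\kappa_p\|Y\|_F^2\le\nabla_YC_p(\bm x,Y):Y\le\mu_p\|Y\|_F^2$ for symmetric $Y$, with $\kappa_p,\mu_p>0$. The admissible set $\mathscr Q_{\mathrm{ad}}$ is a closed convex subset of $\{q\in\mathbb{R}^{N_Q}:q_p>0,\ q^\top\kappa\ge\tilde\kappa,\ q^\top\mu\le\tilde\mu\}$ with fixed $\tilde\kappa,\tilde\mu>0$. $A(q):V\to V'$, $\langle A(q)u,v\rangle=\int_\Omega\nabla_YC_q(\bm x,Ju):Jv\,d\bm x$. Observation: $C$ is a real Hilbert space, $\mathcal C\in\mathcal L(V,C)$ injective, applied pointwise in time; $C_h=\operatorname{span}\{c_1,\dots,c_{N_C}\}\subset C$ with Gram matrix $\bm M_C$; $\mathcal C_h:V_h\to C_h$ maps $v_h$ to the element with coefficients $\bm M_C^{-1}(\langle\mathcal Cv_h,c_j\rangle_C)_j$; data $y^\delta\in L^2(0,T;C)$ and $y_h^{\delta,k}\in C_h$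 has coefficients $\bm M_C^{-1}(\langle y^\delta(t^k),c_j\rangle_C)_j$. Discretization: $V_h=\operatorname{span}\{\varphi_i\}\subset V$, $\bm M_H,\bm M_V$ its $H$- and $V$-Gram matrices, $\bm A_h(q)=(\langle A(q)\varphi_j,\varphi_i\rangle)_{i,j}$, $\bm L_h^k=(\langle l(t^k),\varphi_j\rangle)_j$, $\bm R^{k-1+\zeta}_{1,h}=\zeta\bm L_h^k+(1-\zeta)\bm L_h^{k-1}$, $\Delta t=T/K$. Full-order solution for $q_r$: for $k=1,\dots,K$, $\tfrac1{\Delta t}\rho\bm M_H(\dot{\bm u}_h^k-\dot{\bm u}_h^{k-1})+\bm A_h(q_r)(\zeta\bm u_h^k+(1-\zeta)\bm u_h^{k-1})=\bm R^{k-1+\zeta}_{1,h}$ and $\tfrac1{\Delta t}\rho\bm M_H(\bm u_h^k-\bm u_h^{k-1})=\rho\bm M_H(\zeta\dot{\bm u}_h^k+(1-\zeta)\dot{\bm u}_h^{k-1})$, with $\bm u_h^0=((u_0,\varphi_j)_V)_j$, $\dot{\bm u}_h^0=((u_1,\varphi_j)_V)_j$. Reduced spaces: $\bm\Psi_V\in\mathbb{R}^{N_V\times n_V}$ with $\bm\Psi_V^\top\bm M_V\bm\Psi_V=I$, $\bm\Psi_Q$ a reduced parameter basis orthonormal in $\bm M_Q$; $Q_{\mathrm{ad},r}=\{\bm q_r:\bm\Psi_Q\bm q_r\in\mathscr Q_{\mathrm{ad}}\}$, reduced parameters enter full-order matrices as $\bm\Psi_Q\bm q_r$. Reduced solution: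 the same scheme with $\bm M_H,\bm A_h(q_r),\bm R_{1,h}$ replaced by $\bm\Psi_V^\top\bm M_H\bm\Psi_V$, $\bm\Psi_V^\top\bm A_h(q_r)\bm\Psi_V$, $\bm\Psi_V^\top\bm R_{1,h}$, with initial values $\bm\Psi_V^\top\bm u_h^0$, $\bm\Psi_V^\top\dot{\bm u}_h^0$. *)

theory Defs
  imports "HOL-Analysis.Analysis"
begin

definition coef_to_elem :: "('n::finite \<Rightarrow> 'v::real_vector) \<Rightarrow> real^'n \<Rightarrow> 'v" where
  "coef_to_elem b x = (\<Sum>i\<in>UNIV. (x $ i) *\<^sub>R b i)"

definition gram :: "('n::finite \<Rightarrow> 'v::real_inner) \<Rightarrow> real^'n^'n" where
  "gram b = (\<chi> i j. inner (b j) (b i))"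

definition obs_h :: "('m::finite \<Rightarrow> 'c::real_inner) \<Rightarrow> 'c \<Rightarrow> 'c" where
  "obs_h c w = coef_to_elem c (matrix_inv (gram c) *v (\<chi> j. inner w (c j)))"

definition A_of :: "('v \<Rightarrow> 'v \<Rightarrow> real) \<Rightarrow> ('p::finite \<Rightarrow> 'v \<Rightarrow> 'v \<Rightarrow> real)
                     \<Rightarrow> real^'p \<Rightarrow> 'v \<Rightarrow> 'v \<Rightarrow> real" where
  "A_of A0 Ap q u v = A0 u v + (\<Sum>p\<in>UNIV. q $ p * Ap p u v)"

definition stiff :: "('v \<Rightarrow> 'v \<Rightarrow> real) \<Rightarrow> ('n::finite \<Rightarrow> 'v) \<Rightarrow> real^'n^'n" where
  "stiff a phi = (\<chi> i j. a (phi j) (phi i))"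

definition scheme_solution ::
  "real^'n^'n \<Rightarrow> real^'n^'n \<Rightarrow> (nat \<Rightarrow> real^'n) \<Rightarrow> real \<Rightarrow> real \<Rightarrow> real \<Rightarrow> nat
   \<Rightarrow> real^'n \<Rightarrow> real^'n \<Rightarrow> (nat \<Rightarrow> real^'n) \<Rightarrow> (nat \<Rightarrow> real^'n) \<Rightarrow> bool" where
  "scheme_solution M A L \<zeta> \<rho> dt K u0 u1 u ud \<longleftrightarrow>
     u 0 = u0 \<and> ud 0 = u1 \<and>
     (\<forall>k\<in>{1..K}.
        (1/dt) *\<^sub>R (\<rho> *\<^sub>R (M *v (ud k - ud (k-1))))
          + A *v (\<zeta> *\<^sub>R u k + (1-\<zeta>) *\<^sub>R u (k-1))
          = \<zeta> *\<^sub>R L k + (1-\<zeta>) *\<^sub>R L (k-1)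
      \<and> (1/dt) *\<^sub>R (\<rho> *\<^sub>R (M *v (u k - u (k-1))))
          = \<rho> *\<^sub>R (M *v (\<zeta> *\<^sub>R ud k + (1-\<zeta>) *\<^sub>R ud (k-1))))"

end

theory Submission
  imports Defs
begin

lemma coef_diff: "coef_to_elem b (x - y) = coef_to_elem b x - coef_to_elem b y"
  unfolding coef_to_elem_def by (simp add: scaleR_left_diff_distrib sum_subtractf)

lemma obs_diff: "obs_h c (x - y) = obs_h c x - obs_h c y"
proof -
  have "(\<chi> j. inner (x - y) (c j)) = (\<chi> j. inner x (c j)) - (\<chi> j. inner y (c j))"
    by (simp add: vec_eq_iff inner_diff_left)
  then show ?thesis unfolding obs_h_def
    by (simp add: matrix_vector_mult_diff_distrib coef_diff)
qed

lemma quad_stiff: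
  fixes a :: "'v::real_vector \<Rightarrow> 'v \<Rightarrow> real" and \<phi> :: "'n::finite \<Rightarrow> 'v"
  assumes l1: "\<And>x. linear (a x)" and l2: "\<And>y. linear (\<lambda>x. a x y)"
  shows "e \<bullet> (stiff a \<phi> *v e) = a (coef_to_elem \<phi> e) (coef_to_elem \<phi> e)"
proof -
  have "a (coef_to_elem \<phi> e) (coef_to_elem \<phi> e) = (\<Sum>j\<in>UNIV. e $ j * a (\<phi> j) (coef_to_elem \<phi> e))"
    unfolding coef_to_elem_def[of \<phi> e]
    by (simp add: linear_sum[OF l2] linear_scale[OF l2] o_def)
  also have "\<dots> = (\<Sum>j\<in>UNIV. e $ j * (\<Sum>i\<in>UNIV. e $ i * a (\<phi> j) (\<phi> i)))"
    unfolding coef_to_elem_def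
    by (simp add: linear_sum[OF l1] linear_scale[OF l1] o_def)
  also have "\<dots> = (\<Sum>j\<in>UNIV. \<Sum>i\<in>UNIV. e $ i * (a (\<phi> j) (\<phi> i) * e $ j))"
    by (simp add: sum_distrib_left mult_ac)
  also have "\<dots> = (\<Sum>i\<in>UNIV. \<Sum>j\<in>UNIV. e $ i * (a (\<phi> j) (\<phi> i) * e $ j))"
    by (rule sum.swap)
  also have "\<dots> = e \<bullet> (stiff a \<phi> *v e)"
    unfolding inner_vec_def stiff_def matrix_vector_mult_def
    by (simp add: sum_distrib_left)
  finally show ?thesis by simp
qed

lemma gram_stiff: "gram c = stiff inner c"
  unfolding gram_def stiff_def by simp

lemma quad_gram:
  fixes c :: "'n::finite \<Rightarrow> 'c::real_inner"
  shows "x \<bullet> (gram c *v x) = inner (coef_to_elem c x) (coef_to_elem c x)"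
  unfolding gram_stiff
  by (rule quad_stiff) (simp_all add: linear_iff inner_add_left inner_add_right)

lemma gram_invertible:
  fixes c :: "'n::finite \<Rightarrow> 'c::real_inner"
  assumes "inj c" "independent (range c)"
  shows "invertible (gram c)"
proof -
  have "\<forall>x. gram c *v x = 0 \<longrightarrow> x = 0"
  proof (intro allI impI)
    fix x assume gx: "gram c *v x = 0"
    have "inner (coef_to_elem c x) (coef_to_elem c x) = 0" using gx quad_gram[of x c] by simp
    then have z: "coef_to_elem c x = 0" by simp
    show "x = 0"
    proof (rule ccontr)
      assume "x \<noteq> 0"
      then obtain i where i: "x $ i \<noteq> 0" by (auto simp: vec_eq_iff)
      define u where "u v = x $ (inv c v)" for v
      have "(\<Sum>v\<in>range c. u v *\<^sub>R v) = (\<Sum>j\<in>UNIV. u (c j) *\<^sub>R c j)"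
        using assms(1) by (simp add: sum.reindex)
      also have "\<dots> = coef_to_elem c x" using assms(1) by (simp add: u_def coef_to_elem_def)
      finally have "(\<Sum>v\<in>range c. u v *\<^sub>R v) = 0" using z by simp
      moreover have "u (c i) \<noteq> 0" using assms(1) i by (simp add: u_def)
      ultimately have "dependent (range c)"
        by (subst dependent_finite) auto
      then show False using assms(2) by simp
    qed
  qed
  then show ?thesis
    using matrix_left_invertible_ker invertible_left_inverse by blast
qed

lemma obs_norm:
  fixes c :: "'n::finite \<Rightarrow> 'c::real_inner"
  assumes "inj c" "independent (range c)"
  shows "norm (obs_h c w) \<le> norm w"
proof -
  define G where "G = gram c"
  define b where "b = (\<chi> j. inner w (c j))"
  define x where "x = matrix_inv G *v b"
  have inv: "G ** matrix_inv G = mat 1"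
    using gram_invertible[OF assms] unfolding G_def invertible_def matrix_inv_def
    by (metis (mono_tags, lifting) someI_ex)
  have Gx: "G *v x = b" unfolding x_def by (simp add: matrix_vector_mul_assoc inv)
  define P where "P = coef_to_elem c x"
  have P: "obs_h c w = P" unfolding P_def obs_h_def x_def b_def G_def by simp
  have ip: "inner P (c j) = inner w (c j)" for j
  proof -
    have "inner P (c j) = (G *v x) $ j"
      unfolding P_def coef_to_elem_def G_def gram_def matrix_vector_mult_def
      by (simp add: inner_sum_left mult.commute)
    then show ?thesis using Gx by (simp add: b_def)
  qed
  have "inner (w - P) P = (\<Sum>j\<in>UNIV. x $ j * (inner w (c j) - inner P (c j)))"
    unfolding P_def[symmetric] 
    by (subst (2) P_def) (simp add: coef_to_elem_def inner_sum_right inner_diff_left algebra_simps)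
  also have "\<dots> = 0" by (simp add: ip)
  finally have "orthogonal P (w - P)" by (simp add: orthogonal_def inner_commute)
  then have "(norm w)\<^sup>2 = (norm P)\<^sup>2 + (norm (w - P))\<^sup>2"
    using norm_add_Pythagorean[of P "w - P"] by simp
  then have "(norm P)\<^sup>2 \<le> (norm w)\<^sup>2" by simp
  then show ?thesis using P by (simp add: power2_le_iff_abs_le)
qed

lemma final_ineq:
  fixes A B :: "nat \<Rightarrow> 'c::real_inner" and Q :: "nat \<Rightarrow> real"
  assumes dt: "0 < dt" and a: "0 < a" and C: "0 \<le> C"
    and dQ: "\<And>k. (norm (A k - B k))\<^sup>2 \<le> C\<^sup>2 / a * Q k"
    and Qnn: "\<And>k. 0 \<le> Q k"
  shows "\<bar>dt / 2 * (\<Sum>k\<in>S. (norm (A k))\<^sup>2) - dt / 2 * (\<Sum>k\<in>S. (norm (B k))\<^sup>2)\<bar>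
     \<le> C\<^sup>2 / (2 * a) * (sqrt (dt * (\<Sum>k\<in>S. Q k)))\<^sup>2
        + C * sqrt (2 * (dt / 2 * (\<Sum>k\<in>S. (norm (B k))\<^sup>2)) / a) * sqrt (dt * (\<Sum>k\<in>S. Q k))"
proof -
  define d where "d k = A k - B k" for k
  define SB where "SB = (\<Sum>k\<in>S. (norm (B k))\<^sup>2)"
  define SD where "SD = (\<Sum>k\<in>S. (norm (d k))\<^sup>2)"
  define SQ where "SQ = (\<Sum>k\<in>S. Q k)"
  have SQnn: "0 \<le> SQ" unfolding SQ_def by (simp add: sum_nonneg Qnn)
  have SBnn: "0 \<le> SB" unfolding SB_def by (simp add: sum_nonneg)
  have SDnn: "0 \<le> SD" unfolding SD_def by (simp add: sum_nonneg)
  have pt: "\<bar>(norm (A k))\<^sup>2 - (norm (B k))\<^sup>2\<bar> \<le> (norm (d k))\<^sup>2 + 2 * (norm (B k) * norm (d k))" for k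
  proof -
    have Ak: "A k = B k + d k" by (simp add: d_def)
    have "(norm (A k))\<^sup>2 - (norm (B k))\<^sup>2 = 2 * inner (B k) (d k) + (norm (d k))\<^sup>2"
      unfolding Ak power2_norm_eq_inner by (simp add: inner_add_left inner_add_right inner_commute)
    moreover have "\<bar>inner (B k) (d k)\<bar> \<le> norm (B k) * norm (d k)" by (rule Cauchy_Schwarz_ineq2)
    moreover have "0 \<le> (norm (d k))\<^sup>2" by simp
    ultimately show ?thesis by (simp only: abs_le_iff) linarith
  qed
  have s1: "\<bar>SB' - SB\<bar> \<le> SD + 2 * (\<Sum>k\<in>S. norm (B k) * norm (d k))"
    if "SB' = (\<Sum>k\<in>S. (norm (A k))\<^sup>2)" for SB'
  proof -
    have "\<bar>SB' - SB\<bar> = \<bar>\<Sum>k\<in>S. (norm (A k))\<^sup>2 - (norm (B k))\<^sup>2\<bar>"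
      using that by (simp add: SB_def sum_subtractf)
    also have "\<dots> \<le> (\<Sum>k\<in>S. \<bar>(norm (A k))\<^sup>2 - (norm (B k))\<^sup>2\<bar>)" by (rule sum_abs)
    also have "\<dots> \<le> (\<Sum>k\<in>S. (norm (d k))\<^sup>2 + 2 * (norm (B k) * norm (d k)))"
      by (rule sum_mono) (rule pt)
    finally show ?thesis by (simp add: SD_def sum.distrib sum_distrib_left)
  qed
  have s2: "(\<Sum>k\<in>S. norm (B k) * norm (d k)) \<le> sqrt SB * sqrt SD"
    using L2_set_mult_ineq[of "\<lambda>k. norm (B k)" "\<lambda>k. norm (d k)" S]
    by (simp add: L2_set_def SB_def SD_def)
  have s3: "SD \<le> C\<^sup>2 / a * SQ"
    unfolding SD_def SQ_def sum_distrib_left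
    by (rule sum_mono) (use dQ in \<open>simp add: d_def\<close>)
  have sq: "(sqrt (dt * SQ))\<^sup>2 = dt * SQ" using dt SQnn by simp
  have "sqrt SD \<le> sqrt (C\<^sup>2 / a * SQ)" using s3 by simp
  also have "\<dots> = C * sqrt SQ / sqrt a" using C a SQnn
    by (simp add: real_sqrt_mult real_sqrt_divide)
  finally have sD: "sqrt SD \<le> C * sqrt SQ / sqrt a" .
  have key: "dt * (sqrt SB * sqrt SD) \<le> C * sqrt (2 * (dt / 2 * SB) / a) * sqrt (dt * SQ)"
  proof -
    have "dt * (sqrt SB * sqrt SD) \<le> dt * (sqrt SB * (C * sqrt SQ / sqrt a))"
      using sD dt SBnn by (intro mult_left_mono) auto
    also have "\<dots> = C * sqrt (2 * (dt / 2 * SB) / a) * sqrt (dt * SQ)"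
      using dt a by (simp add: real_sqrt_mult real_sqrt_divide field_simps)
    finally show ?thesis .
  qed
  define SA where "SA = (\<Sum>k\<in>S. (norm (A k))\<^sup>2)"
  have "\<bar>dt / 2 * SA - dt / 2 * SB\<bar> = dt / 2 * \<bar>SA - SB\<bar>"
  proof -
    have "\<bar>dt / 2 * SA - dt / 2 * SB\<bar> = \<bar>dt / 2\<bar> * \<bar>SA - SB\<bar>"
      by (metis abs_mult right_diff_distrib)
    then show ?thesis using dt by simp
  qed
  also have "\<dots> \<le> dt / 2 * (SD + 2 * (sqrt SB * sqrt SD))"
    using s1[OF SA_def] s2 dt by (intro mult_left_mono) auto
  also have "\<dots> \<le> C\<^sup>2 / (2 * a) * (dt * SQ) + C * sqrt (2 * (dt / 2 * SB) / a) * sqrt (dt * SQ)"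
  proof -
    have "dt / 2 * SD \<le> dt / 2 * (C\<^sup>2 / a * SQ)" using s3 dt by (intro mult_left_mono) auto
    then show ?thesis using key by (simp add: field_simps)
  qed
  also have "\<dots> = C\<^sup>2 / (2 * a) * (sqrt (dt * SQ))\<^sup>2 + C * sqrt (2 * (dt / 2 * SB) / a) * sqrt (dt * SQ)"
    by (simp only: sq)
  finally show ?thesis unfolding SA_def SB_def SQ_def .
qed
theorem theorem3p2:
  fixes \<iota> :: "'v::{real_inner,complete_space} \<Rightarrow> 'h::{real_inner,complete_space}"
    and Jop :: "'v \<Rightarrow> 'l::{real_inner,complete_space}"
    and A0 :: "'v \<Rightarrow> 'v \<Rightarrow> real"
    and Ap :: "'np::finite \<Rightarrow> 'v \<Rightarrow> 'v \<Rightarrow> real"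
    and \<kappa> \<mu> :: "real^'np"
    and \<kappa>t \<mu>t CP \<rho> \<zeta> T :: real
    and K :: nat
    and Qad :: "(real^'np) set"
    and Cop :: "'v \<Rightarrow> 'c::{real_inner,complete_space}"
    and c :: "'nc::finite \<Rightarrow> 'c"
    and y\<delta> :: "real \<Rightarrow> 'c"
    and l :: "real \<Rightarrow> 'v \<Rightarrow> real"
    and u0 u1 :: 'v
    and \<phi> :: "'nV::finite \<Rightarrow> 'v"
    and \<Psi>V :: "real^'nr::finite^'nV"
    and \<Psi>Q :: "real^'nq::finite^'np"
    and MQ :: "real^'np^'np"
    and qr :: "real^'nq"
    and uh udh :: "nat \<Rightarrow> real^'nV"
    and ur udr :: "nat \<Rightarrow> real^'nr"
  assumes inj_emb: "bounded_linear \<iota>" "inj \<iota>"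
    and J_lin: "bounded_linear Jop"
    and A0_bil: "bounded_bilinear A0" and A0_sym: "\<And>u v. A0 u v = A0 v u"
    and A0_nonneg: "\<And>v. 0 \<le> A0 v v"
    and Ap_bil: "\<And>p. bounded_bilinear (Ap p)" and Ap_sym: "\<And>p u v. Ap p u v = Ap p v u"
    and Ap_bounds: "\<And>p v. \<kappa> $ p * (norm (Jop v))\<^sup>2 \<le> Ap p v v \<and> Ap p v v \<le> \<mu> $ p * (norm (Jop v))\<^sup>2"
    and \<kappa>_pos: "\<And>p. 0 < \<kappa> $ p" and \<mu>_pos: "\<And>p. 0 < \<mu> $ p"
    and \<kappa>t_pos: "0 < \<kappa>t" and \<mu>t_pos: "0 < \<mu>t"
    and CP_pos: "0 < CP" and poincare: "\<And>v. norm v \<le> CP * norm (Jop v)"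
    and Qad_closed: "closed Qad" and Qad_convex: "convex Qad"
    and Qad_sub: "Qad \<subseteq> {q. (\<forall>p. 0 < q $ p) \<and> \<kappa>t \<le> q \<bullet> \<kappa> \<and> q \<bullet> \<mu> \<le> \<mu>t}"
    and \<rho>_pos: "0 < \<rho>"
    and \<zeta>_range: "1/2 \<le> \<zeta>" "\<zeta> \<le> 1"
    and T_pos: "0 < T" and K_pos: "0 < K"
    and C_lin: "bounded_linear Cop" and C_inj: "inj Cop"
    and c_basis: "inj c" "independent (range c)"
    and l_lin: "\<And>t. bounded_linear (l t)"
    and \<phi>_basis: "inj \<phi>" "independent (range \<phi>)"
    and \<Psi>V_orth: "transpose \<Psi>V ** gram \<phi> ** \<Psi>V = mat 1"
    and MQ_spd: "transpose MQ = MQ" "\<And>x. x \<noteq> 0 \<Longrightarrow> 0 < x \<bullet> (MQ *v x)"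
    and \<Psi>Q_orth: "transpose \<Psi>Q ** MQ ** \<Psi>Q = mat 1"
    and qr_adm: "\<Psi>Q *v qr \<in> Qad"
    and full_sol: "scheme_solution (gram (\<iota> \<circ> \<phi>)) (stiff (A_of A0 Ap (\<Psi>Q *v qr)) \<phi>)
                     (\<lambda>k. \<chi> j. l (real k * (T / real K)) (\<phi> j)) \<zeta> \<rho> (T / real K) K
                     (\<chi> j. inner u0 (\<phi> j)) (\<chi> j. inner u1 (\<phi> j)) uh udh"
    and red_sol: "scheme_solution (transpose \<Psi>V ** gram (\<iota> \<circ> \<phi>) ** \<Psi>V)
                     (transpose \<Psi>V ** stiff (A_of A0 Ap (\<Psi>Q *v qr)) \<phi> ** \<Psi>V)
                     (\<lambda>k. transpose \<Psi>V *v (\<chi> j. l (real k * (T / real K)) (\<phi> j))) \<zeta> \<rho> (T / real K) K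
                     (transpose \<Psi>V *v (\<chi> j. inner u0 (\<phi> j)))
                     (transpose \<Psi>V *v (\<chi> j. inner u1 (\<phi> j))) ur udr"
  shows
    "let dt = T / real K;
         Ah = stiff (A_of A0 Ap (\<Psi>Q *v qr)) \<phi>;
         yh = (\<lambda>k. obs_h c (y\<delta> (real k * dt)));
         Jh = dt / 2 * (\<Sum>k=1..K. (norm (obs_h c (Cop (coef_to_elem \<phi> (uh k))) - yh k))\<^sup>2);
         Jr = dt / 2 * (\<Sum>k=1..K. (norm (obs_h c (Cop (coef_to_elem \<phi> (\<Psi>V *v ur k))) - yh k))\<^sup>2);
         e = (\<lambda>k. uh k - \<Psi>V *v ur k);
         \<Delta>u = sqrt (dt * (\<Sum>k=1..K. e k \<bullet> (Ah *v e k)));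
         a = \<kappa>t / CP\<^sup>2
     in \<bar>Jh - Jr\<bar> \<le> (onorm Cop)\<^sup>2 / (2 * a) * \<Delta>u\<^sup>2 + onorm Cop * sqrt (2 * Jr / a) * \<Delta>u"
proof -
  define q where "q = \<Psi>Q *v qr"
  define af where "af = A_of A0 Ap q"
  define E where "E = coef_to_elem \<phi>"
  have qin: "(\<forall>p. 0 < q $ p) \<and> \<kappa>t \<le> q \<bullet> \<kappa>" using qr_adm Qad_sub q_def by auto
  have lin1: "\<And>x. linear (af x)"
    unfolding af_def A_of_def linear_iff
    by (simp add: bounded_bilinear.add_right[OF A0_bil] bounded_bilinear.add_right[OF Ap_bil]
        bounded_bilinear.scaleR_right[OF A0_bil] bounded_bilinear.scaleR_right[OF Ap_bil]
        sum.distrib sum_distrib_left algebra_simps)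
  have lin2: "\<And>y. linear (\<lambda>x. af x y)"
    unfolding af_def A_of_def linear_iff
    by (simp add: bounded_bilinear.add_left[OF A0_bil] bounded_bilinear.add_left[OF Ap_bil]
        bounded_bilinear.scaleR_left[OF A0_bil] bounded_bilinear.scaleR_left[OF Ap_bil]
        sum.distrib sum_distrib_left algebra_simps)
  have coer: "\<kappa>t / CP\<^sup>2 * (norm v)\<^sup>2 \<le> af v v" for v
  proof -
    have "(\<Sum>p\<in>UNIV. q $ p * (\<kappa> $ p * (norm (Jop v))\<^sup>2)) \<le> (\<Sum>p\<in>UNIV. q $ p * Ap p v v)"
      using qin Ap_bounds by (intro sum_mono mult_left_mono) (auto intro: less_imp_le)
    moreover have "(\<Sum>p\<in>UNIV. q $ p * (\<kappa> $ p * (norm (Jop v))\<^sup>2)) = (q \<bullet> \<kappa>) * (norm (Jop v))\<^sup>2"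
      by (simp add: inner_vec_def sum_distrib_left mult_ac)
    moreover have "\<kappa>t * (norm (Jop v))\<^sup>2 \<le> (q \<bullet> \<kappa>) * (norm (Jop v))\<^sup>2"
      using qin by (intro mult_right_mono) auto
    moreover have "(norm v)\<^sup>2 \<le> (CP * norm (Jop v))\<^sup>2"
      using poincare[of v] by (intro power_mono) auto
    then have "\<kappa>t / CP\<^sup>2 * (norm v)\<^sup>2 \<le> \<kappa>t / CP\<^sup>2 * (CP * norm (Jop v))\<^sup>2"
      using \<kappa>t_pos CP_pos by (intro mult_left_mono) auto
    then have "\<kappa>t / CP\<^sup>2 * (norm v)\<^sup>2 \<le> \<kappa>t * (norm (Jop v))\<^sup>2"
      using CP_pos by (simp add: power_mult_distrib)
    moreover have "0 \<le> A0 v v" by (rule A0_nonneg)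
    ultimately show ?thesis unfolding af_def A_of_def by linarith
  qed
  have a_pos: "0 < \<kappa>t / CP\<^sup>2" using \<kappa>t_pos CP_pos by simp
  have C_nn: "0 \<le> onorm Cop" using onorm_pos_le[OF C_lin] .
  define yh where "yh = (\<lambda>k. obs_h c (y\<delta> (real k * (T / real K))))"
  define e where "e = (\<lambda>k. uh k - \<Psi>V *v ur k)"
  define Ah where "Ah = stiff af \<phi>"
  have Q_eq: "e k \<bullet> (Ah *v e k) = af (E (e k)) (E (e k))" for k
    unfolding Ah_def E_def by (rule quad_stiff[OF lin1 lin2])
  have Qnn: "0 \<le> e k \<bullet> (Ah *v e k)" for k
    unfolding Q_eq using coer[of "E (e k)"] a_pos
    by (meson order_trans zero_le_mult_iff zero_le_power2 less_imp_le)
  have dQ: "(norm ((obs_h c (Cop (coef_to_elem \<phi> (uh k))) - yh k)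
              - (obs_h c (Cop (coef_to_elem \<phi> (\<Psi>V *v ur k))) - yh k)))\<^sup>2
            \<le> (onorm Cop)\<^sup>2 / (\<kappa>t / CP\<^sup>2) * (e k \<bullet> (Ah *v e k))" for k
  proof -
    define w where "w = E (e k)"
    have eq: "(obs_h c (Cop (coef_to_elem \<phi> (uh k))) - yh k)
              - (obs_h c (Cop (coef_to_elem \<phi> (\<Psi>V *v ur k))) - yh k) = obs_h c (Cop w)"
      unfolding w_def E_def e_def
      by (simp add: obs_diff[symmetric] coef_diff linear_diff[OF bounded_linear.linear[OF C_lin]])
    have "norm (obs_h c (Cop w)) \<le> onorm Cop * norm w"
      using obs_norm[OF c_basis, of "Cop w"] onorm[OF C_lin, of w] by linarith
    then have s1: "(norm (obs_h c (Cop w)))\<^sup>2 \<le> (onorm Cop)\<^sup>2 * (norm w)\<^sup>2"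
      by (metis norm_ge_zero power_mono power_mult_distrib)
    have "(norm w)\<^sup>2 \<le> af w w / (\<kappa>t / CP\<^sup>2)"
      using coer[of w] a_pos by (metis mult.commute pos_le_divide_eq)
    then have s2: "(onorm Cop)\<^sup>2 * (norm w)\<^sup>2 \<le> (onorm Cop)\<^sup>2 * (af w w / (\<kappa>t / CP\<^sup>2))"
      by (intro mult_left_mono) auto
    have s3: "(onorm Cop)\<^sup>2 * (af w w / (\<kappa>t / CP\<^sup>2)) = (onorm Cop)\<^sup>2 / (\<kappa>t / CP\<^sup>2) * af w w"
      by (simp only: times_divide_eq_right times_divide_eq_left mult.commute)
    have "(norm (obs_h c (Cop w)))\<^sup>2 \<le> (onorm Cop)\<^sup>2 / (\<kappa>t / CP\<^sup>2) * af w w"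
      using s1 s2 s3 by linarith
    then show ?thesis unfolding eq Q_eq w_def .
  qed
  have dt_pos: "0 < T / real K" using T_pos K_pos by simp
  show ?thesis
    unfolding Let_def
    using final_ineq[OF dt_pos a_pos C_nn dQ Qnn, where S="{1..K}"]
    unfolding yh_def e_def Ah_def af_def q_def by simp
qed

end
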